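(* Let $\mathcal{X}$ be an input space, let predictors be functions $\theta:\mathcal{X}\to\mathbb{R}^K$, and let each input $x\in\mathcal{X}$ have label $y=y(x)$ given by a fixed labeling function common to all distributions considered. Let $L(\cdot,\cdot)$ be a loss function such that $L(v,y)$ is convex in its first argument $v\in\mathbb{R}^K$. For a probability density $Q$ on $\mathcal{X}$ and a predictor $\theta$, define the expected loss $\mathcal{L}(Q,\theta)=\int_x L(\theta(x),y)\,Q(x)\,dx$ (assumed finite for all predictors considered). Let $Q_S^1,\dots,Q_S^n$ be source densities on $\mathcal{X}$, and for each $1\le k\le n$ let $\theta_S^k=\arg\min_{\theta}\mathcal{L}(Q_S^k,\theta)$ be an optimal source predictor. Assume there exists $\lambda\in\mathbb{R}^n$ with $\lambda\ge 0$ and $\lambda^\top\mathbb{1}=1$ such that the target density satisfies $Q_T=\sum_{i=1}^n\lambda_iQ_S^i$. Define the target predictor (at points where $Q_T(x)>0$) $$\theta_T(x)=\sum_{k=1}^n\frac{\lambda_kQ_S^k(x)}{\sum_{j=1}^n\lambda_jQ_S^j(x)}\,\theta_S^k(x).$$ Then $$\mathcal{L}(Q_T,\theta_T)\le\min_{1\le j\le n}\mathcal{L}(Q_T,\theta_S^j).$$ Moreover, letting $\alpha=\arg\min_{1\le j\le n}\mathcal{L}(Q_T,\theta_S^j)$, this inequality is strict if all entries of $\lambda$ are strictly positive and there exists a source $i$ for which $\mathcal{L}(Q_S^i,\theta_S^i)<\mathcal{L}(Q_S^i,\theta_S^{\alpha})$.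
   Context: This is a model for multi-source domain adaptation: each of $n$ source domains has an input distribution with density $Q_S^k$ on $\mathcal{X}$, the target domain has density $Q_T$, and the supervised expected loss of a predictor $\theta$ under a density $Q$ is $\mathcal{L}(Q,\theta)=\int_x L(\theta(x),y)Q(x)\,dx$, where $y$ denotes the ground-truth label of $x$. *)

theory Defs
  imports "HOL-Analysis.Analysis"
begin

definition exp_loss ::
  "'a measure \<Rightarrow> (real^'k \<Rightarrow> 'b \<Rightarrow> real) \<Rightarrow> ('a \<Rightarrow> 'b) \<Rightarrow> ('a \<Rightarrow> real) \<Rightarrow> ('a \<Rightarrow> real^'k) \<Rightarrow> real"
  where "exp_loss M L y Q \<theta> = (\<integral>x. L (\<theta> x) (y x) * Q x \<partial>M)"

definition finite_loss ::
  "'a measure \<Rightarrow> (real^'k \<Rightarrow> 'b \<Rightarrow> real) \<Rightarrow> ('a \<Rightarrow> 'b) \<Rightarrow> ('a \<Rightarrow> real) \<Rightarrow> ('a \<Rightarrow> real^'k) \<Rightarrow> bool"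
  where "finite_loss M L y Q \<theta> = integrable M (\<lambda>x. L (\<theta> x) (y x) * Q x)"

definition prob_density :: "'a measure \<Rightarrow> ('a \<Rightarrow> real) \<Rightarrow> bool"
  where "prob_density M Q = (Q \<in> borel_measurable M \<and> (\<forall>x\<in>space M. 0 \<le> Q x)
                              \<and> integrable M Q \<and> (\<integral>x. Q x \<partial>M) = 1)"

definition optimal_predictor ::
  "'a measure \<Rightarrow> (real^'k \<Rightarrow> 'b \<Rightarrow> real) \<Rightarrow> ('a \<Rightarrow> 'b) \<Rightarrow> ('a \<Rightarrow> real) \<Rightarrow> ('a \<Rightarrow> real^'k) \<Rightarrow> bool"
  where "optimal_predictor M L y Q \<theta> =
     (finite_loss M L y Q \<theta> \<and>
      (\<forall>\<theta>'. finite_loss M L y Q \<theta>' \<longrightarrow> exp_loss M L y Q \<theta> \<le> exp_loss M L y Q \<theta>'))"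

end

theory Submission
  imports Defs
begin

theorem lemma1:
  fixes M :: "'a measure"
    and L :: "real^'k \<Rightarrow> 'b \<Rightarrow> real"
    and y :: "'a \<Rightarrow> 'b"
    and n :: nat
    and QS :: "nat \<Rightarrow> 'a \<Rightarrow> real"
    and QT :: "'a \<Rightarrow> real"
    and \<theta>S :: "nat \<Rightarrow> 'a \<Rightarrow> real^'k"
    and \<theta>T :: "'a \<Rightarrow> real^'k"
    and lam :: "nat \<Rightarrow> real"
  assumes convex: "\<And>lab. convex_on UNIV (\<lambda>v. L v lab)"
    and dens: "\<And>k. k \<in> {1..n} \<Longrightarrow> prob_density M (QS k)"
    and opt: "\<And>k. k \<in> {1..n} \<Longrightarrow> optimal_predictor M L y (QS k) (\<theta>S k)"
    and lam_nonneg: "\<And>i. i \<in> {1..n} \<Longrightarrow> 0 \<le> lam i"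
    and lam_sum: "(\<Sum>i\<in>{1..n}. lam i) = 1"
    and QT_def: "\<And>x. QT x = (\<Sum>i\<in>{1..n}. lam i * QS i x)"
    and \<theta>T_def: "\<And>x. QT x > 0 \<Longrightarrow>
        \<theta>T x = (\<Sum>k\<in>{1..n}. (lam k * QS k x / (\<Sum>j\<in>{1..n}. lam j * QS j x)) *\<^sub>R \<theta>S k x)"
    and fin_S: "\<And>j k. j \<in> {1..n} \<Longrightarrow> k \<in> {1..n} \<Longrightarrow> finite_loss M L y (QS k) (\<theta>S j)"
    and fin_T: "finite_loss M L y QT \<theta>T"
  shows "exp_loss M L y QT \<theta>T \<le> Min ((\<lambda>j. exp_loss M L y QT (\<theta>S j)) ` {1..n})
    \<and> (\<forall>\<alpha>. \<alpha> \<in> {1..n}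
          \<and> (\<forall>j\<in>{1..n}. exp_loss M L y QT (\<theta>S \<alpha>) \<le> exp_loss M L y QT (\<theta>S j))
          \<and> (\<forall>i\<in>{1..n}. 0 < lam i)
          \<and> (\<exists>i\<in>{1..n}. exp_loss M L y (QS i) (\<theta>S i) < exp_loss M L y (QS i) (\<theta>S \<alpha>))
        \<longrightarrow> exp_loss M L y QT \<theta>T < Min ((\<lambda>j. exp_loss M L y QT (\<theta>S j)) ` {1..n}))"
proof -
  define E where "E = (\<lambda>Q \<theta>. exp_loss M L y Q \<theta>)"
  have n1: "{1..n} \<noteq> {}" using lam_sum by (cases n) auto
  have fin: "finite {1..n}" by simp
  have intS: "integrable M (\<lambda>x. L (\<theta>S j x) (y x) * QS k x)" if "j \<in> {1..n}" "k \<in> {1..n}" for j k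
    using fin_S[OF that] unfolding finite_loss_def .
  have QSnn: "0 \<le> QS k x" if "k \<in> {1..n}" "x \<in> space M" for k x
    using dens[OF that(1)] that(2) unfolding prob_density_def by auto
  have ET: "E QT (\<theta>S j) = (\<Sum>k\<in>{1..n}. lam k * E (QS k) (\<theta>S j))" if j: "j \<in> {1..n}" for j
  proof -
    have "E QT (\<theta>S j) = (\<integral>x. (\<Sum>k\<in>{1..n}. lam k * (L (\<theta>S j x) (y x) * QS k x)) \<partial>M)"
      unfolding E_def exp_loss_def QT_def
      by (simp add: sum_distrib_left sum_distrib_right ac_simps)
    also have "\<dots> = (\<Sum>k\<in>{1..n}. lam k * E (QS k) (\<theta>S j))"
      unfolding E_def exp_loss_def
      using Bochner_Integration.integral_sum[where I="{1..n}" and f="\<lambda>k x. lam k * (L (\<theta>S j x) (y x) * QS k x)"]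
        intS[OF j] by simp
    finally show ?thesis .
  qed
  \<comment> \<open>pointwise Jensen\<close>
  have pw: "L (\<theta>T x) (y x) * QT x \<le> (\<Sum>k\<in>{1..n}. lam k * (L (\<theta>S k x) (y x) * QS k x))"
    if x: "x \<in> space M" for x
  proof -
    have nn: "\<And>k. k \<in> {1..n} \<Longrightarrow> 0 \<le> lam k * QS k x"
      using lam_nonneg QSnn[OF _ x] by auto
    have QTnn: "0 \<le> QT x" unfolding QT_def using nn by (intro sum_nonneg) auto
    show ?thesis
    proof (cases "QT x = 0")
      case True
      then have "\<forall>k\<in>{1..n}. lam k * QS k x = 0"
        using sum_nonneg_eq_0_iff[OF fin, of "\<lambda>k. lam k * QS k x"] nn unfolding QT_def by blast
      then have "(\<Sum>k\<in>{1..n}. lam k * (L (\<theta>S k x) (y x) * QS k x)) = 0"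
        by (intro sum.neutral) (metis mult.left_commute mult_zero_right)
      then show ?thesis using True by simp
    next
      case False
      then have pos: "QT x > 0" using QTnn by simp
      define w where "w k = lam k * QS k x / QT x" for k
      have T: "\<theta>T x = (\<Sum>k\<in>{1..n}. w k *\<^sub>R \<theta>S k x)"
        using \<theta>T_def[OF pos] unfolding w_def QT_def[symmetric] .
      have ws: "(\<Sum>k\<in>{1..n}. w k) = 1"
        unfolding w_def using pos by (simp add: sum_divide_distrib[symmetric] QT_def)
      have wn: "\<And>k. k \<in> {1..n} \<Longrightarrow> w k \<ge> 0" unfolding w_def using nn pos by simp
      have "L (\<theta>T x) (y x) \<le> (\<Sum>k\<in>{1..n}. w k * L (\<theta>S k x) (y x))"
        unfolding T by (rule convex_on_sum[OF fin n1 convex ws wn]) auto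
      then have "L (\<theta>T x) (y x) * QT x \<le> (\<Sum>k\<in>{1..n}. w k * L (\<theta>S k x) (y x)) * QT x"
        using pos by (simp add: mult_right_mono)
      also have "\<dots> = (\<Sum>k\<in>{1..n}. lam k * (L (\<theta>S k x) (y x) * QS k x))"
        unfolding sum_distrib_right w_def using pos by (intro sum.cong) auto
      finally show ?thesis .
    qed
  qed
  have step1: "E QT \<theta>T \<le> (\<Sum>k\<in>{1..n}. lam k * E (QS k) (\<theta>S k))"
  proof -
    have "E QT \<theta>T \<le> (\<integral>x. (\<Sum>k\<in>{1..n}. lam k * (L (\<theta>S k x) (y x) * QS k x)) \<partial>M)"
      unfolding E_def exp_loss_def
      by (rule integral_mono[OF fin_T[unfolded finite_loss_def] _ pw]) (auto intro!: integrable_mult_right intS)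
    also have "\<dots> = (\<Sum>k\<in>{1..n}. lam k * E (QS k) (\<theta>S k))"
      unfolding E_def exp_loss_def
      using Bochner_Integration.integral_sum[where I="{1..n}" and f="\<lambda>k x. lam k * (L (\<theta>S k x) (y x) * QS k x)"]
        intS by simp
    finally show ?thesis .
  qed
  have optk: "E (QS k) (\<theta>S k) \<le> E (QS k) (\<theta>S j)" if "j \<in> {1..n}" "k \<in> {1..n}" for j k
    using opt[OF that(2)] fin_S[OF that] unfolding optimal_predictor_def E_def by blast
  have le_all: "E QT \<theta>T \<le> E QT (\<theta>S j)" if j: "j \<in> {1..n}" for j
  proof -
    have "(\<Sum>k\<in>{1..n}. lam k * E (QS k) (\<theta>S k)) \<le> (\<Sum>k\<in>{1..n}. lam k * E (QS k) (\<theta>S j))"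
      by (intro sum_mono mult_left_mono optk[OF j] lam_nonneg) auto
    then show ?thesis using step1 ET[OF j] by simp
  qed
  have part1: "E QT \<theta>T \<le> Min ((\<lambda>j. E QT (\<theta>S j)) ` {1..n})"
    using le_all n1 by (subst Min_ge_iff) auto
  have part2: "E QT \<theta>T < Min ((\<lambda>j. E QT (\<theta>S j)) ` {1..n})"
    if a: "\<alpha> \<in> {1..n}" and amin: "\<forall>j\<in>{1..n}. E QT (\<theta>S \<alpha>) \<le> E QT (\<theta>S j)"
      and lp: "\<forall>i\<in>{1..n}. 0 < lam i"
      and ex: "\<exists>i\<in>{1..n}. E (QS i) (\<theta>S i) < E (QS i) (\<theta>S \<alpha>)" for \<alpha>
  proof -
    have Meq: "Min ((\<lambda>j. E QT (\<theta>S j)) ` {1..n}) = E QT (\<theta>S \<alpha>)"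
      using a amin by (intro Min_eqI) auto
    obtain i where i: "i \<in> {1..n}" "E (QS i) (\<theta>S i) < E (QS i) (\<theta>S \<alpha>)" using ex by blast
    have "(\<Sum>k\<in>{1..n}. lam k * E (QS k) (\<theta>S k)) < (\<Sum>k\<in>{1..n}. lam k * E (QS k) (\<theta>S \<alpha>))"
    proof (rule sum_strict_mono_ex1[OF fin])
      show "\<forall>k\<in>{1..n}. lam k * E (QS k) (\<theta>S k) \<le> lam k * E (QS k) (\<theta>S \<alpha>)"
        using optk[OF a] lam_nonneg by (auto intro: mult_left_mono)
      show "\<exists>k\<in>{1..n}. lam k * E (QS k) (\<theta>S k) < lam k * E (QS k) (\<theta>S \<alpha>)"
        using i lp by auto
    qed
    then show ?thesis using step1 ET[OF a] Meq by simp
  qed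
  show ?thesis using part1 part2 unfolding E_def by blast
qed

end
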